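(* For every admissible sequence of bins $\sigma$ and all integers $s',\ell'\ge0$, $R(\sigma,s',0)=\mathrm{OPT}(\sigma,s',0)$ and $R(\sigma,0,\ell')=\mathrm{OPT}(\sigma,0,\ell')$.
   Context: Fix an integer $S>1$, $L=2S-1$, $M=4S-3$. Bins have integer sizes in $[S,M]$ and arrive in a sequence $\sigma$, admissible if it ends with at least as many bins of size $M$ as there are items under consideration. A packing assigns every item to a bin with total item size in each bin at most the bin size; its cost is the sum of the sizes of bins receiving at least one item. A packing is valid if each empty bin is smaller than every item packed in a later bin. A bin is wasteful if its empty space is at least the size of some item packed in a later bin; a packing is thrifty if no bin is wasteful. A partial packing of a finite sequence of bins is reasonable if every bin $b$ of that sequence contains: one item of size $S$ if $\mathrm{size}(b)\in[S,L-1]$; one item of size $L$ if $\mathrm{size}(b)=L$; two items of size $S$ or one item of size $L$ if $\mathrm{size}(b)\in[L+1,L+S-1]$; one item of size $S$ and one of size $L$ if $\mathrm{size}(b)=L+S$; three items of size $S$ or one item of size $S$ and one of size $L$ if $\mathrm{size}(b)\in[L+S+1,2L-1]$. The key bin of a packing is the first bin after which no item of size $L$ remains unpacked or at most two items of size $S$ remain unpacked; the front is the restriction of the packing to the prefix ending with the key bin. A packing is reasonable if it is thrifty and its front is reasonable. $\mathrm{OPT}(\sigma,s,\ell)$ is the minimum cost of a valid packing of $s$ items of size $S$ and $\ell$ items of size $L$ into $\sigma$; $R(\sigma,s,\ell)$ is the maximum cost of a reasonable packing of these items into $\sigma$. *)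

theory Defs
  imports Main
begin

text \<open>The integer S > 1 is passed explicitly as parameter S.
  Bin sequences are lists of bin sizes; items are given as a list of item sizes,
  and a packing is a map from item indices to bin indices.\<close>

definition Lsz :: "nat \<Rightarrow> nat" where "Lsz S = 2 * S - 1"
definition Msz :: "nat \<Rightarrow> nat" where "Msz S = 4 * S - 3"

definition items :: "nat \<Rightarrow> nat \<Rightarrow> nat \<Rightarrow> nat list" where
  "items S s l = replicate s S @ replicate l (Lsz S)"

definition admissible :: "nat \<Rightarrow> nat list \<Rightarrow> nat \<Rightarrow> bool" where
  "admissible S \<sigma> n \<longleftrightarrow>
     (\<forall>b\<in>set \<sigma>. S \<le> b \<and> b \<le> Msz S) \<and>
     n \<le> length \<sigma> \<and> (\<forall>j. length \<sigma> - n \<le> j \<and> j < length \<sigma> \<longrightarrow> \<sigma> ! j = Msz S)"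

definition load :: "nat list \<Rightarrow> (nat \<Rightarrow> nat) \<Rightarrow> nat \<Rightarrow> nat" where
  "load its p j = (\<Sum>i\<in>{i. i < length its \<and> p i = j}. its ! i)"

definition used :: "nat list \<Rightarrow> (nat \<Rightarrow> nat) \<Rightarrow> nat \<Rightarrow> bool" where
  "used its p j \<longleftrightarrow> (\<exists>i < length its. p i = j)"

definition is_packing :: "nat list \<Rightarrow> nat list \<Rightarrow> (nat \<Rightarrow> nat) \<Rightarrow> bool" where
  "is_packing \<sigma> its p \<longleftrightarrow>
     (\<forall>i < length its. p i < length \<sigma>) \<and> (\<forall>j < length \<sigma>. load its p j \<le> \<sigma> ! j)"

definition cost :: "nat list \<Rightarrow> nat list \<Rightarrow> (nat \<Rightarrow> nat) \<Rightarrow> nat" where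
  "cost \<sigma> its p = (\<Sum>j\<in>{j. j < length \<sigma> \<and> used its p j}. \<sigma> ! j)"

definition valid :: "nat list \<Rightarrow> nat list \<Rightarrow> (nat \<Rightarrow> nat) \<Rightarrow> bool" where
  "valid \<sigma> its p \<longleftrightarrow> is_packing \<sigma> its p \<and>
     (\<forall>j < length \<sigma>. \<not> used its p j \<longrightarrow>
        (\<forall>i < length its. j < p i \<longrightarrow> \<sigma> ! j < its ! i))"

definition wasteful :: "nat list \<Rightarrow> nat list \<Rightarrow> (nat \<Rightarrow> nat) \<Rightarrow> nat \<Rightarrow> bool" where
  "wasteful \<sigma> its p j \<longleftrightarrow>
     (\<exists>i < length its. j < p i \<and> its ! i \<le> \<sigma> ! j - load its p j)"

definition thrifty :: "nat list \<Rightarrow> nat list \<Rightarrow> (nat \<Rightarrow> nat) \<Rightarrow> bool" where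
  "thrifty \<sigma> its p \<longleftrightarrow> is_packing \<sigma> its p \<and> (\<forall>j < length \<sigma>. \<not> wasteful \<sigma> its p j)"

definition cnt :: "nat list \<Rightarrow> (nat \<Rightarrow> nat) \<Rightarrow> nat \<Rightarrow> nat \<Rightarrow> nat" where
  "cnt its p sz j = card {i. i < length its \<and> p i = j \<and> its ! i = sz}"

definition bin_reasonable :: "nat \<Rightarrow> nat \<Rightarrow> nat \<Rightarrow> nat \<Rightarrow> bool" where
  "bin_reasonable S b a c \<longleftrightarrow>
     (S \<le> b \<and> b \<le> Lsz S - 1 \<and> a = 1 \<and> c = 0) \<or>
     (b = Lsz S \<and> a = 0 \<and> c = 1) \<or>
     (Lsz S + 1 \<le> b \<and> b \<le> Lsz S + S - 1 \<and> ((a = 2 \<and> c = 0) \<or> (a = 0 \<and> c = 1))) \<or>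
     (b = Lsz S + S \<and> a = 1 \<and> c = 1) \<or>
     (Lsz S + S + 1 \<le> b \<and> b \<le> 2 * Lsz S - 1 \<and> ((a = 3 \<and> c = 0) \<or> (a = 1 \<and> c = 1)))"

definition key_cond :: "nat \<Rightarrow> nat list \<Rightarrow> (nat \<Rightarrow> nat) \<Rightarrow> nat \<Rightarrow> bool" where
  "key_cond S its p k \<longleftrightarrow>
     (\<forall>i < length its. its ! i = Lsz S \<longrightarrow> p i < k) \<or>
     card {i. i < length its \<and> its ! i = S \<and> k \<le> p i} \<le> 2"

definition front_len :: "nat \<Rightarrow> nat list \<Rightarrow> nat list \<Rightarrow> (nat \<Rightarrow> nat) \<Rightarrow> nat" where
  "front_len S \<sigma> its p = (LEAST k. k \<le> length \<sigma> \<and> key_cond S its p k)"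

definition reasonable :: "nat \<Rightarrow> nat list \<Rightarrow> nat list \<Rightarrow> (nat \<Rightarrow> nat) \<Rightarrow> bool" where
  "reasonable S \<sigma> its p \<longleftrightarrow> thrifty \<sigma> its p \<and>
     (\<forall>j < front_len S \<sigma> its p.
        bin_reasonable S (\<sigma> ! j) (cnt its p S j) (cnt its p (Lsz S) j))"

definition OPT :: "nat \<Rightarrow> nat list \<Rightarrow> nat \<Rightarrow> nat \<Rightarrow> nat" where
  "OPT S \<sigma> s l = Min {cost \<sigma> (items S s l) p | p. valid \<sigma> (items S s l) p}"

definition R :: "nat \<Rightarrow> nat list \<Rightarrow> nat \<Rightarrow> nat \<Rightarrow> nat" where
  "R S \<sigma> s l = Max {cost \<sigma> (items S s l) p | p. reasonable S \<sigma> (items S s l) p}"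

end

theory Submission
  imports Defs
begin

lemma load_rep: "load (replicate n w) p j = w * card {i. i < n \<and> p i = j}"
proof -
  have "(\<Sum>i\<in>{i. i < length (replicate n w) \<and> p i = j}. replicate n w ! i)
        = (\<Sum>i\<in>{i. i < n \<and> p i = j}. w)" by (rule sum.cong) auto
  then show ?thesis unfolding load_def by simp
qed

lemma card_below: "card {i::nat. i < n \<and> p i < j} = (\<Sum>t<j. card {i. i < n \<and> (p i::nat) = t})"
proof (induction j)
  case 0 then show ?case by simp
next
  case (Suc j)
  have e: "{i. i < n \<and> p i < Suc j} = {i. i < n \<and> p i < j} \<union> {i. i < n \<and> p i = j}" by auto
  have "card ({i. i < n \<and> p i < j} \<union> {i. i < n \<and> p i = j})
      = card {i. i < n \<and> p i < j} + card {i. i < n \<and> p i = j}"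
  proof (rule card_Un_disjoint)
    show "finite {i. i < n \<and> p i < j}" by (rule finite_subset[of _ "{..<n}"]) auto
    show "finite {i. i < n \<and> p i = j}" by (rule finite_subset[of _ "{..<n}"]) auto
  qed auto
  then show ?case using Suc e by simp
qed

lemma cap_le:
  assumes "is_packing \<sigma> (replicate n w) p" "t < length \<sigma>" "0 < w"
  shows "card {i. i < n \<and> p i = t} \<le> \<sigma> ! t div w"
proof -
  have "w * card {i. i < n \<and> p i = t} \<le> \<sigma> ! t"
    using assms by (simp add: is_packing_def load_rep)
  then show ?thesis using assms(3) by (simp add: less_eq_div_iff_mult_less_eq mult.commute)
qed

lemma full:
  assumes "thrifty \<sigma> (replicate n w) q" "t < length \<sigma>" "i < n" "t < q i" "0 < w"
  shows "card {i. i < n \<and> q i = t} = \<sigma> ! t div w"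
proof -
  let ?c = "card {i. i < n \<and> q i = t}"
  have pk: "is_packing \<sigma> (replicate n w) q" using assms(1) by (simp add: thrifty_def)
  have a: "w * ?c \<le> \<sigma> ! t"
    using pk assms by (simp add: is_packing_def load_rep)
  have "\<not> wasteful \<sigma> (replicate n w) q t" using assms(1,2) by (simp add: thrifty_def)
  then have "\<not> w \<le> \<sigma> ! t - w * ?c" using assms(3,4)
    by (auto simp: wasteful_def load_rep)
  then have b: "\<sigma> ! t < w * Suc ?c" using a by simp
  show ?thesis using div_nat_eqI[OF _ b] a by (simp add: mult.commute)
qed

lemma key:
  assumes th: "thrifty \<sigma> (replicate n w) q" and va: "valid \<sigma> (replicate n w) p"
    and w: "0 < w" and j: "j < length \<sigma>" and i0: "i0 < n" "q i0 = j"
  shows "\<exists>i<n. p i = j"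
proof (rule ccontr)
  assume nu: "\<not> (\<exists>i<n. p i = j)"
  have pkq: "is_packing \<sigma> (replicate n w) q" using th by (simp add: thrifty_def)
  have pkp: "is_packing \<sigma> (replicate n w) p" using va by (simp add: valid_def)
  have "i0 \<in> {i. i < n \<and> q i = j}" using i0 by simp
  then have c1: "1 \<le> card {i. i < n \<and> q i = j}"
    by (metis (no_types, lifting) One_nat_def Suc_leI card_gt_0_iff empty_iff finite_nat_set_iff_bounded mem_Collect_eq)
  then have "1 \<le> \<sigma> ! j div w" using cap_le[OF pkq j w] by linarith
  then have wj: "w \<le> \<sigma> ! j" using w by (simp add: less_eq_div_iff_mult_less_eq)
  have all: "\<forall>i<n. p i < j"
  proof (intro allI impI)
    fix i assume "i < n"
    show "p i < j"
    proof (rule ccontr)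
      assume "\<not> p i < j"
      then have "j < p i" using nu \<open>i < n\<close> by (metis linorder_neqE_nat)
      moreover have "\<not> used (replicate n w) p j" using nu by (simp add: used_def)
      ultimately have "\<sigma> ! j < replicate n w ! i" using va j \<open>i < n\<close> by (auto simp: valid_def)
      then show False using wj \<open>i < n\<close> by simp
    qed
  qed
  then have "{i. i < n \<and> p i < j} = {i. i < n}" by auto
  then have "n = (\<Sum>t<j. card {i. i < n \<and> p i = t})" using card_below[of n p j] by simp
  also have "\<dots> \<le> (\<Sum>t<j. \<sigma> ! t div w)"
    by (rule sum_mono) (use cap_le[OF pkp _ w] j in auto)
  also have "\<dots> = (\<Sum>t<j. card {i. i < n \<and> q i = t})"
    by (rule sum.cong) (use full[OF th _ i0(1) _ w] j i0 in auto)
  finally have "n + 1 \<le> (\<Sum>t<Suc j. card {i. i < n \<and> q i = t})" using c1 by simp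
  also have "\<dots> = card {i. i < n \<and> q i < Suc j}" using card_below[of n q "Suc j"] by simp
  also have "\<dots> \<le> card {..<n}" by (rule card_mono) auto
  finally show False by simp
qed

lemma cost_le:
  assumes th: "thrifty \<sigma> (replicate n w) q" and va: "valid \<sigma> (replicate n w) p" and w: "0 < w"
  shows "cost \<sigma> (replicate n w) q \<le> cost \<sigma> (replicate n w) p"
  unfolding cost_def
proof (rule sum_mono2)
  show "finite {j. j < length \<sigma> \<and> used (replicate n w) p j}" by simp
  show "{j. j < length \<sigma> \<and> used (replicate n w) q j} \<subseteq> {j. j < length \<sigma> \<and> used (replicate n w) p j}"
    using key[OF th va w] by (auto simp: used_def)
qed auto

lemma thrifty_valid:
  assumes th: "thrifty \<sigma> its q" shows "valid \<sigma> its q"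
  unfolding valid_def
proof (intro conjI allI impI)
  show "is_packing \<sigma> its q" using th by (simp add: thrifty_def)
next
  fix j i assume j: "j < length \<sigma>" and nu: "\<not> used its q j" and i: "i < length its" and ji: "j < q i"
  have e: "{i. i < length its \<and> q i = j} = {}" using nu by (auto simp: used_def)
  have l0: "load its q j = 0" unfolding load_def e by simp
  have "\<not> wasteful \<sigma> its q j" using th j by (simp add: thrifty_def)
  then show "\<sigma> ! j < its ! i" using i ji l0 by (auto simp: wasteful_def)
qed

lemma greedy:
  assumes w: "0 < w" and n: "n \<le> (\<Sum>t<length \<sigma>. \<sigma> ! t div w)"
  shows "\<exists>q. thrifty \<sigma> (replicate n w) q"
proof -
  define F where "F j = (\<Sum>t<j. \<sigma> ! t div w)" for j
  define g where "g i = (LEAST j. i < F (Suc j))" for i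
  have Fm: "F a \<le> F b" if "a \<le> b" for a b
    unfolding F_def by (rule sum_mono2) (use that in auto)
  have Fs: "F (Suc t) = F t + \<sigma> ! t div w" for t by (simp add: F_def)
  have gp: "F (g i) \<le> i \<and> i < F (Suc (g i))" if "i < n" for i
  proof -
    have ex: "i < F (Suc (length \<sigma>))" using that n Fm[of "length \<sigma>" "Suc (length \<sigma>)"]
      unfolding F_def[of "length \<sigma>"] by simp
    have a: "i < F (Suc (g i))" unfolding g_def by (rule LeastI[of _ "length \<sigma>"]) (rule ex)
    have b: "F (g i) \<le> i"
    proof (cases "g i")
      case 0 then show ?thesis by (simp add: F_def)
    next
      case (Suc k)
      then have "k < g i" by simp
      then have "\<not> i < F (Suc k)" unfolding g_def by (rule not_less_Least)
      then show ?thesis using Suc by simp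
    qed
    show ?thesis using a b by simp
  qed
  have gc: "g i = t \<longleftrightarrow> F t \<le> i \<and> i < F (Suc t)" if "i < n" for i t
  proof
    assume "g i = t" then show "F t \<le> i \<and> i < F (Suc t)" using gp[OF that] by simp
  next
    assume h: "F t \<le> i \<and> i < F (Suc t)"
    show "g i = t"
    proof (rule ccontr)
      assume "g i \<noteq> t"
      then have "g i < t \<or> t < g i" by auto
      then show False
      proof
        assume "g i < t" then have "F (Suc (g i)) \<le> F t" using Fm by simp
        then show False using h gp[OF that] by simp
      next
        assume "t < g i" then have "F (Suc t) \<le> F (g i)" using Fm by simp
        then show False using h gp[OF that] by simp
      qed
    qed
  qed
  have glen: "g i < length \<sigma>" if "i < n" for i
  proof (rule ccontr)
    assume "\<not> g i < length \<sigma>"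
    then have "F (length \<sigma>) \<le> F (g i)" using Fm by simp
    then show False using gp[OF that] n that unfolding F_def[of "length \<sigma>"] by simp
  qed
  have cset: "{i. i < n \<and> g i = t} \<subseteq> {F t..<F (Suc t)}" for t using gp by auto
  have cle: "card {i. i < n \<and> g i = t} \<le> \<sigma> ! t div w" for t
    using card_mono[OF _ cset[of t]] Fs[of t] by simp
  have ceq: "card {i. i < n \<and> g i = t} = \<sigma> ! t div w" if "F (Suc t) \<le> n" for t
  proof -
    have "{i. i < n \<and> g i = t} = {F t..<F (Suc t)}"
    proof (rule set_eqI, rule iffI)
      fix x assume "x \<in> {i. i < n \<and> g i = t}"
      then show "x \<in> {F t..<F (Suc t)}" using gp[of x] by auto
    next
      fix x assume x: "x \<in> {F t..<F (Suc t)}"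
      then have "x < n" using that by simp
      then show "x \<in> {i. i < n \<and> g i = t}" using gc[of x t] x by simp
    qed
    then show ?thesis using Fs[of t] by simp
  qed
  have pk: "is_packing \<sigma> (replicate n w) g"
    unfolding is_packing_def
  proof (intro conjI allI impI)
    fix i assume "i < length (replicate n w)" then show "g i < length \<sigma>" using glen by simp
  next
    fix j assume "j < length \<sigma>"
    have "w * card {i. i < n \<and> g i = j} \<le> w * (\<sigma> ! j div w)" using cle by simp
    also have "\<dots> \<le> \<sigma> ! j" by (simp add: mult.commute)
    finally show "load (replicate n w) g j \<le> \<sigma> ! j" by (simp add: load_rep)
  qed
  have "\<not> wasteful \<sigma> (replicate n w) g t" for t
  proof
    assume "wasteful \<sigma> (replicate n w) g t"
    then obtain i where i: "i < n" "t < g i" "w \<le> \<sigma> ! t - w * card {i. i < n \<and> g i = t}"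
      by (auto simp: wasteful_def load_rep)
    have "F (Suc t) \<le> F (g i)" using i(2) Fm by simp
    then have "F (Suc t) \<le> n" using gp[OF i(1)] i(1) by simp
    then have "\<sigma> ! t - w * card {i. i < n \<and> g i = t} = \<sigma> ! t mod w"
      using ceq by (simp add: minus_mult_div_eq_mod)
    then show False using i(3) mod_less_divisor[OF w, of "\<sigma> ! t"] by linarith
  qed
  then have "thrifty \<sigma> (replicate n w) g" using pk by (simp add: thrifty_def)
  then show ?thesis by blast
qed

lemma adm_cap:
  assumes "admissible S \<sigma> n" "0 < w" "w \<le> Msz S"
  shows "n \<le> (\<Sum>t<length \<sigma>. \<sigma> ! t div w)"
proof -
  have len: "n \<le> length \<sigma>" and last: "\<And>j. length \<sigma> - n \<le> j \<Longrightarrow> j < length \<sigma> \<Longrightarrow> \<sigma> ! j = Msz S"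
    using assms(1) by (auto simp: admissible_def)
  have one: "1 \<le> Msz S div w" using assms(2,3) by (simp add: less_eq_div_iff_mult_less_eq)
  have "n = (\<Sum>t\<in>{length \<sigma> - n..<length \<sigma>}. 1)" using len by simp
  also have "\<dots> \<le> (\<Sum>t\<in>{length \<sigma> - n..<length \<sigma>}. \<sigma> ! t div w)"
    by (rule sum_mono) (use last one in auto)
  also have "\<dots> \<le> (\<Sum>t<length \<sigma>. \<sigma> ! t div w)" by (rule sum_mono2) auto
  finally show ?thesis .
qed

lemma main:
  assumes w: "0 < w" and cap: "n \<le> (\<Sum>t<length \<sigma>. \<sigma> ! t div w)"
    and rt: "\<And>q. reasonable S \<sigma> (replicate n w) q \<longleftrightarrow> thrifty \<sigma> (replicate n w) q"
  shows "Max {cost \<sigma> (replicate n w) p | p. reasonable S \<sigma> (replicate n w) p}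
       = Min {cost \<sigma> (replicate n w) p | p. valid \<sigma> (replicate n w) p}"
proof -
  let ?its = "replicate n w"
  let ?A = "{cost \<sigma> ?its p | p. reasonable S \<sigma> ?its p}"
  let ?B = "{cost \<sigma> ?its p | p. valid \<sigma> ?its p}"
  have bnd: "cost \<sigma> ?its p \<le> (\<Sum>j<length \<sigma>. \<sigma> ! j)" for p
    unfolding cost_def by (rule sum_mono2) auto
  have fA: "finite ?A" by (rule finite_subset[of _ "{..(\<Sum>j<length \<sigma>. \<sigma> ! j)}"]) (use bnd in auto)
  have fB: "finite ?B" by (rule finite_subset[of _ "{..(\<Sum>j<length \<sigma>. \<sigma> ! j)}"]) (use bnd in auto)
  obtain q0 where q0: "thrifty \<sigma> ?its q0" using greedy[OF w cap] by blast
  have neA: "?A \<noteq> {}" using q0 rt by blast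
  have neB: "?B \<noteq> {}" using thrifty_valid[OF q0] by blast
  obtain q where q: "reasonable S \<sigma> ?its q" "Max ?A = cost \<sigma> ?its q" using Max_in[OF fA neA] by auto
  obtain p where p: "valid \<sigma> ?its p" "Min ?B = cost \<sigma> ?its p" using Min_in[OF fB neB] by auto
  have qt: "thrifty \<sigma> ?its q" using q(1) rt by simp
  have "Max ?A \<le> Min ?B" using q(2) p(2) cost_le[OF qt p(1) w] by simp
  moreover have "Min ?B \<le> Max ?A" using Min_le[OF fB] q(2) thrifty_valid[OF qt] by blast
  ultimately show ?thesis by simp
qed

lemma reas_iff:
  assumes "front_len S \<sigma> its q = 0"
  shows "reasonable S \<sigma> its q \<longleftrightarrow> thrifty \<sigma> its q"
  using assms by (simp add: reasonable_def)

theorem proposition3: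
  fixes S :: nat and \<sigma> :: "nat list" and s' l' :: nat
  assumes "1 < S"
  shows "(admissible S \<sigma> s' \<longrightarrow> R S \<sigma> s' 0 = OPT S \<sigma> s' 0) \<and>
         (admissible S \<sigma> l' \<longrightarrow> R S \<sigma> 0 l' = OPT S \<sigma> 0 l')"
proof (intro conjI impI)
  assume adm: "admissible S \<sigma> s'"
  have it: "items S s' 0 = replicate s' S" by (simp add: items_def)
  have "front_len S \<sigma> (replicate s' S) q = 0" for q
    unfolding front_len_def
    by (rule Least_eq_0) (use assms in \<open>auto simp: key_cond_def Lsz_def\<close>)
  then have rt: "reasonable S \<sigma> (replicate s' S) q \<longleftrightarrow> thrifty \<sigma> (replicate s' S) q" for q
    by (rule reas_iff)
  have cap: "s' \<le> (\<Sum>t<length \<sigma>. \<sigma> ! t div S)"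
    by (rule adm_cap[OF adm]) (use assms in \<open>auto simp: Msz_def\<close>)
  show "R S \<sigma> s' 0 = OPT S \<sigma> s' 0"
    unfolding R_def OPT_def it using main[of S s' \<sigma> S, OF _ cap rt] assms by simp
next
  assume adm: "admissible S \<sigma> l'"
  have it: "items S 0 l' = replicate l' (Lsz S)" by (simp add: items_def)
  have "front_len S \<sigma> (replicate l' (Lsz S)) q = 0" for q
  proof -
    have e: "{i. i < length (replicate l' (Lsz S)) \<and> replicate l' (Lsz S) ! i = S \<and> 0 \<le> q i} = {}"
      using assms by (auto simp: Lsz_def)
    have "key_cond S (replicate l' (Lsz S)) q 0" unfolding key_cond_def e by simp
    then show ?thesis unfolding front_len_def by (intro Least_eq_0) simp
  qed
  then have rt: "reasonable S \<sigma> (replicate l' (Lsz S)) q \<longleftrightarrow> thrifty \<sigma> (replicate l' (Lsz S)) q" for q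
    by (rule reas_iff)
  have cap: "l' \<le> (\<Sum>t<length \<sigma>. \<sigma> ! t div Lsz S)"
    by (rule adm_cap[OF adm]) (use assms in \<open>auto simp: Msz_def Lsz_def\<close>)
  show "R S \<sigma> 0 l' = OPT S \<sigma> 0 l'"
    unfolding R_def OPT_def it using main[of "Lsz S" l' \<sigma> S, OF _ cap rt] assms
    by (simp add: Lsz_def)
qed

end
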